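(* Let $G$ be a graph containing a pendant block isomorphic to $K_r$ with $r\ge 3$, whose cutpoint is $v$. Then \[ |M_G|=\binom{r-1}{2}\,|M_{G-K_r}|+\sum_{p\in N(v)}|M_{G-(N[v]\cup N[p])}|, \] where $G-K_r$ denotes the graph obtained from $G$ by deleting all $r$ vertices of this block (including $v$).
   Context: Graphs are finite, simple, undirected. A block is a maximal $2$-connected subgraph; a pendant block is a block containing exactly one cutpoint of $G$. An induced matching is a matching whose endpoints induce a $1$-regular subgraph; it is maximal if not properly contained in another induced matching; $M_G$ is the set of maximal induced matchings of $G$ (a graph with no edges has exactly one, the empty matching). For $S\subseteq V(G)$, $G-S$ is the subgraph induced by $V(G)\setminus S$; $N(v)$, $N[v]$ are the open and closed neighborhoods. *)

theory Defs
  imports Main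
begin

text \<open>The induced subgraph
G - S is represented by the pair (V - S, E): all notions below only look at
E restricted to the given vertex set.\<close>

definition sgraph :: "'a set \<Rightarrow> ('a \<Rightarrow> 'a \<Rightarrow> bool) \<Rightarrow> bool" where
  "sgraph V E \<longleftrightarrow> finite V \<and> (\<forall>u w. E u w \<longrightarrow> u \<in> V \<and> w \<in> V \<and> u \<noteq> w \<and> E w u)"

definition edges :: "'a set \<Rightarrow> ('a \<Rightarrow> 'a \<Rightarrow> bool) \<Rightarrow> 'a set set" where
  "edges V E = {{u, w} | u w. u \<in> V \<and> w \<in> V \<and> E u w}"

definition nbhd :: "'a set \<Rightarrow> ('a \<Rightarrow> 'a \<Rightarrow> bool) \<Rightarrow> 'a \<Rightarrow> 'a set" where
  "nbhd V E v = {u \<in> V. E v u}"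

definition cnbhd :: "'a set \<Rightarrow> ('a \<Rightarrow> 'a \<Rightarrow> bool) \<Rightarrow> 'a \<Rightarrow> 'a set" where
  "cnbhd V E v = insert v (nbhd V E v)"

definition reach :: "'a set \<Rightarrow> ('a \<Rightarrow> 'a \<Rightarrow> bool) \<Rightarrow> 'a \<Rightarrow> 'a \<Rightarrow> bool" where
  "reach S E u w \<longleftrightarrow> u \<in> S \<and> (u, w) \<in> {(x, y). x \<in> S \<and> y \<in> S \<and> E x y}\<^sup>*"

definition connected_on :: "'a set \<Rightarrow> ('a \<Rightarrow> 'a \<Rightarrow> bool) \<Rightarrow> bool" where
  "connected_on S E \<longleftrightarrow> S \<noteq> {} \<and> (\<forall>u\<in>S. \<forall>w\<in>S. reach S E u w)"

definition two_connected :: "'a set \<Rightarrow> ('a \<Rightarrow> 'a \<Rightarrow> bool) \<Rightarrow> bool" where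
  "two_connected S E \<longleftrightarrow> card S \<ge> 3 \<and> finite S \<and> connected_on S E \<and>
     (\<forall>x\<in>S. connected_on (S - {x}) E)"

text \<open>A block (of size at least 3): a maximal 2-connected subgraph, given by its vertex set
(maximal 2-connected subgraphs are induced).\<close>
definition is_block :: "'a set \<Rightarrow> ('a \<Rightarrow> 'a \<Rightarrow> bool) \<Rightarrow> 'a set \<Rightarrow> bool" where
  "is_block V E B \<longleftrightarrow> B \<subseteq> V \<and> two_connected B E \<and>
     (\<forall>B'. B \<subset> B' \<and> B' \<subseteq> V \<longrightarrow> \<not> two_connected B' E)"

definition cutpoint :: "'a set \<Rightarrow> ('a \<Rightarrow> 'a \<Rightarrow> bool) \<Rightarrow> 'a \<Rightarrow> bool" where
  "cutpoint V E v \<longleftrightarrow> v \<in> V \<and> (\<exists>u\<in>V - {v}. \<exists>w\<in>V - {v}.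
      reach V E u w \<and> \<not> reach (V - {v}) E u w)"

definition pendant_block :: "'a set \<Rightarrow> ('a \<Rightarrow> 'a \<Rightarrow> bool) \<Rightarrow> 'a set \<Rightarrow> bool" where
  "pendant_block V E B \<longleftrightarrow> is_block V E B \<and> card {u \<in> B. cutpoint V E u} = 1"

definition is_clique :: "'a set \<Rightarrow> ('a \<Rightarrow> 'a \<Rightarrow> bool) \<Rightarrow> bool" where
  "is_clique B E \<longleftrightarrow> (\<forall>x\<in>B. \<forall>y\<in>B. x \<noteq> y \<longrightarrow> E x y)"

definition induced_matching :: "'a set \<Rightarrow> ('a \<Rightarrow> 'a \<Rightarrow> bool) \<Rightarrow> 'a set set \<Rightarrow> bool" where
  "induced_matching V E M \<longleftrightarrow> M \<subseteq> edges V E \<and>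
     (\<forall>e\<in>M. \<forall>f\<in>M. e \<noteq> f \<longrightarrow> e \<inter> f = {}) \<and>
     (\<forall>x\<in>\<Union>M. card {y \<in> \<Union>M. E x y} = 1)"

definition maximal_induced_matching :: "'a set \<Rightarrow> ('a \<Rightarrow> 'a \<Rightarrow> bool) \<Rightarrow> 'a set set \<Rightarrow> bool" where
  "maximal_induced_matching V E M \<longleftrightarrow> induced_matching V E M \<and>
     (\<forall>M'. M \<subset> M' \<longrightarrow> \<not> induced_matching V E M')"

definition MIM :: "'a set \<Rightarrow> ('a \<Rightarrow> 'a \<Rightarrow> bool) \<Rightarrow> 'a set set set" where
  "MIM V E = {M. maximal_induced_matching V E M}"

end

theory Submission
  imports Defs
begin

lemma sg_sym: "sgraph V E \<Longrightarrow> E u w \<Longrightarrow> E w u" by (auto simp: sgraph_def)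
lemma sg_irr: "sgraph V E \<Longrightarrow> E u w \<Longrightarrow> u \<noteq> w" by (auto simp: sgraph_def)
lemma sg_in: "sgraph V E \<Longrightarrow> E u w \<Longrightarrow> u \<in> V \<and> w \<in> V" by (auto simp: sgraph_def)

definition sep :: "('a \<Rightarrow> 'a \<Rightarrow> bool) \<Rightarrow> 'a set \<Rightarrow> 'a set \<Rightarrow> bool" where
 "sep E e f \<longleftrightarrow> e \<inter> f = {} \<and> (\<forall>x\<in>e. \<forall>y\<in>f. \<not> E x y)"

lemma sep_sym: "sgraph V E \<Longrightarrow> sep E e f = sep E f e"
  unfolding sep_def by (auto dest: sg_sym)

lemma edges_iff: "e \<in> edges W E \<longleftrightarrow> (\<exists>a b. e = {a,b} \<and> a \<in> W \<and> b \<in> W \<and> E a b)"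
  by (auto simp: edges_def)

lemma IM_char:
  assumes sg: "sgraph V E"
  shows "induced_matching W E M \<longleftrightarrow> M \<subseteq> edges W E \<and> (\<forall>e\<in>M. \<forall>f\<in>M. e \<noteq> f \<longrightarrow> sep E e f)"
proof
  assume im: "induced_matching W E M"
  have sub: "M \<subseteq> edges W E" using im unfolding induced_matching_def by blast
  have djs: "\<forall>e\<in>M. \<forall>f\<in>M. e \<noteq> f \<longrightarrow> e \<inter> f = {}" using im unfolding induced_matching_def by blast
  have one: "\<forall>x\<in>\<Union>M. card {y \<in> \<Union>M. E x y} = 1" using im unfolding induced_matching_def by blast
  have "sep E e f" if ef: "e \<in> M" "f \<in> M" "e \<noteq> f" for e f
  proof -
    have dj: "e \<inter> f = {}" using djs ef by blast
    have "\<not> E x y" if xy: "x \<in> e" "y \<in> f" for x y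
    proof
      assume Exy: "E x y"
      have "e \<in> edges W E" using sub ef by blast
      then obtain a b where e: "e = {a,b}" "E a b" unfolding edges_iff by blast
      obtain x' where x': "x' \<in> e" "E x x'"
      proof (cases "x = a")
        case True then show ?thesis using that e by blast
      next
        case False then have "x = b" using e xy by blast
        then show ?thesis using that e sg_sym[OF sg] by blast
      qed
      have "x \<in> \<Union>M" using xy ef by blast
      then have c1: "card {z \<in> \<Union>M. E x z} = 1" using one by blast
      then obtain z where z: "{z \<in> \<Union>M. E x z} = {z}" by (metis One_nat_def card_1_singleton_iff)
      have "x' \<in> {z \<in> \<Union>M. E x z}" using x' ef by blast
      moreover have "y \<in> {z \<in> \<Union>M. E x z}" using Exy xy ef by blast
      ultimately have "x' = y" using z by (metis singletonD)
      then show False using dj x' xy by blast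
    qed
    then show ?thesis using dj unfolding sep_def by blast
  qed
  then show "M \<subseteq> edges W E \<and> (\<forall>e\<in>M. \<forall>f\<in>M. e \<noteq> f \<longrightarrow> sep E e f)"
    using sub by blast
next
  assume h: "M \<subseteq> edges W E \<and> (\<forall>e\<in>M. \<forall>f\<in>M. e \<noteq> f \<longrightarrow> sep E e f)"
  have c: "card {y \<in> \<Union>M. E x y} = 1" if xU: "x \<in> \<Union>M" for x
  proof -
    obtain e where eM: "e \<in> M" "x \<in> e" using xU by blast
    then have "e \<in> edges W E" using h by blast
    then obtain a b where e: "e = {a,b}" "E a b" unfolding edges_iff by blast
    obtain x' where x': "e = {x,x'}" "E x x'"
      proof (cases "x = a")
        case True then show ?thesis using that e by blast
      next
        case False then have "x = b" using e eM by blast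
        then show ?thesis using that e sg_sym[OF sg] by blast
      qed
    have "{y \<in> \<Union>M. E x y} = {x'}"
    proof (intro equalityI subsetI)
      fix y assume "y \<in> {y \<in> \<Union>M. E x y}"
      then obtain f where f: "f \<in> M" "y \<in> f" "E x y" by blast
      show "y \<in> {x'}"
      proof (cases "f = e")
        case True
        then show ?thesis using f x' sg_irr[OF sg, of x y] by auto
      next
        case False
        then have "sep E e f" using h eM f by blast
        then show ?thesis using f eM unfolding sep_def by blast
      qed
    next
      fix y assume "y \<in> {x'}"
      then show "y \<in> {y \<in> \<Union>M. E x y}" using x' eM by blast
    qed
    then show ?thesis by simp
  qed
  have d: "\<forall>e\<in>M. \<forall>f\<in>M. e \<noteq> f \<longrightarrow> e \<inter> f = {}" using h unfolding sep_def by blast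
  show "induced_matching W E M" unfolding induced_matching_def using h d c by blast
qed

lemma IM_mono: "sgraph V E \<Longrightarrow> induced_matching W E M' \<Longrightarrow> M \<subseteq> M' \<Longrightarrow> induced_matching W E M"
  by (simp add: IM_char) blast

lemma IM_insert:
  assumes sg: "sgraph V E"
  shows "induced_matching W E (insert g M) \<longleftrightarrow>
     induced_matching W E M \<and> g \<in> edges W E \<and> (\<forall>f\<in>M. f \<noteq> g \<longrightarrow> sep E g f)"
proof -
  have a: "insert g M \<subseteq> edges W E \<longleftrightarrow> g \<in> edges W E \<and> M \<subseteq> edges W E" by blast
  have b: "(\<forall>e\<in>insert g M. \<forall>f\<in>insert g M. e \<noteq> f \<longrightarrow> sep E e f) \<longleftrightarrow>
      (\<forall>e\<in>M. \<forall>f\<in>M. e \<noteq> f \<longrightarrow> sep E e f) \<and> (\<forall>f\<in>M. f \<noteq> g \<longrightarrow> sep E g f)"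
  proof
    assume "\<forall>e\<in>insert g M. \<forall>f\<in>insert g M. e \<noteq> f \<longrightarrow> sep E e f"
    then show "(\<forall>e\<in>M. \<forall>f\<in>M. e \<noteq> f \<longrightarrow> sep E e f) \<and> (\<forall>f\<in>M. f \<noteq> g \<longrightarrow> sep E g f)"
      by blast
  next
    assume h: "(\<forall>e\<in>M. \<forall>f\<in>M. e \<noteq> f \<longrightarrow> sep E e f) \<and> (\<forall>f\<in>M. f \<noteq> g \<longrightarrow> sep E g f)"
    show "\<forall>e\<in>insert g M. \<forall>f\<in>insert g M. e \<noteq> f \<longrightarrow> sep E e f"
    proof (intro ballI impI)
      fix e f assume "e \<in> insert g M" "f \<in> insert g M" "e \<noteq> f"
      then consider "e = g" "f \<in> M" | "f = g" "e \<in> M" | "e \<in> M" "f \<in> M" by blast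
      then show "sep E e f"
      proof cases
        case 1 then show ?thesis using h \<open>e \<noteq> f\<close> by blast
      next
        case 2 then have "sep E f e" using h \<open>e \<noteq> f\<close> by blast
        then show ?thesis using sep_sym[OF sg] by blast
      next
        case 3 then show ?thesis using h \<open>e \<noteq> f\<close> by blast
      qed
    qed
  qed
  show ?thesis unfolding IM_char[OF sg, of W "insert g M"] IM_char[OF sg, of W M] a b by argo
qed

lemma MAX_char:
  assumes sg: "sgraph V E"
  shows "maximal_induced_matching W E M \<longleftrightarrow> induced_matching W E M \<and>
     (\<forall>g\<in>edges W E. g \<notin> M \<longrightarrow> \<not> induced_matching W E (insert g M))"
proof
  assume "maximal_induced_matching W E M"
  then show "induced_matching W E M \<and>
     (\<forall>g\<in>edges W E. g \<notin> M \<longrightarrow> \<not> induced_matching W E (insert g M))"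
    unfolding maximal_induced_matching_def by blast
next
  assume h: "induced_matching W E M \<and>
     (\<forall>g\<in>edges W E. g \<notin> M \<longrightarrow> \<not> induced_matching W E (insert g M))"
  have "\<not> induced_matching W E M'" if sub: "M \<subset> M'" for M'
  proof
    assume im: "induced_matching W E M'"
    obtain g where g: "g \<in> M'" "g \<notin> M" using sub by blast
    have "g \<in> edges W E" using im g IM_char[OF sg] by blast
    moreover have "induced_matching W E (insert g M)" using IM_mono[OF sg im] g sub by blast
    ultimately show False using h g by blast
  qed
  then show "maximal_induced_matching W E M" using h unfolding maximal_induced_matching_def by blast
qed

lemma IM_down:
  assumes sg: "sgraph V E" and "induced_matching V' E M" and "\<Union>M \<subseteq> W"
  shows "induced_matching W E M"
proof -
  have "M \<subseteq> edges W E"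
  proof
    fix e assume "e \<in> M"
    then have "e \<in> edges V' E" "e \<subseteq> W" using assms(2,3) unfolding IM_char[OF sg] by blast+
    then show "e \<in> edges W E" unfolding edges_iff by blast
  qed
  then show ?thesis using assms(2) unfolding IM_char[OF sg] by blast
qed

lemma IM_up:
  assumes sg: "sgraph V E" and "induced_matching W E M" and "W \<subseteq> V'"
  shows "induced_matching V' E M"
proof -
  have "edges W E \<subseteq> edges V' E" using assms(3) unfolding edges_def by blast
  then show ?thesis using assms(2) unfolding IM_char[OF sg] by blast
qed

lemma IM_sub:
  assumes sg: "sgraph V E" and "induced_matching W E M"
  shows "\<Union>M \<subseteq> W"
proof
  fix x assume "x \<in> \<Union>M"
  then obtain e where "e \<in> M" "x \<in> e" by blast
  then have "e \<in> edges W E" using assms(2) unfolding IM_char[OF sg] by blast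
  then show "x \<in> W" using \<open>x \<in> e\<close> unfolding edges_iff by blast
qed

lemma finite_MIM:
  assumes "finite W" shows "finite (MIM W E)"
proof -
  have "MIM W E \<subseteq> Pow (Pow W)"
    unfolding MIM_def maximal_induced_matching_def induced_matching_def edges_def by blast
  then show ?thesis using assms by (meson finite_Pow_iff finite_subset)
qed



lemma reach_refl: "a \<in> S \<Longrightarrow> reach S E a a" by (simp add: reach_def)


lemma reach_edge: "a \<in> S \<Longrightarrow> b \<in> S \<Longrightarrow> E a b \<Longrightarrow> reach S E a b"
  unfolding reach_def by (auto intro: r_into_rtrancl)


lemma reach_trans: "reach S E a b \<Longrightarrow> reach S E b c \<Longrightarrow> reach S E a c"
  unfolding reach_def by (meson rtrancl_trans)


lemma reach_end: "reach S E a b \<Longrightarrow> b \<in> S"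
  unfolding reach_def by (auto elim: rtranclE)


lemma reach_sym:
  assumes sg: "sgraph V E" and r: "reach S E a b"
  shows "reach S E b a"
proof -
  let ?R = "{(x,y). x \<in> S \<and> y \<in> S \<and> E x y}"
  have conv: "?R\<inverse> = ?R" using sg_sym[OF sg] by auto
  have "(a,b) \<in> ?R\<^sup>*" using r unfolding reach_def by blast
  then have "(b,a) \<in> (?R\<inverse>)\<^sup>*" by (rule rtrancl_converseI)
  then have "(b,a) \<in> ?R\<^sup>*" using conv by simp
  then show ?thesis using reach_end[OF r] unfolding reach_def by blast
qed


lemma reach_path:
  assumes "\<And>k. i \<le> k \<Longrightarrow> k \<le> j \<Longrightarrow> f k \<in> T"
    and "\<And>k. i \<le> k \<Longrightarrow> k < j \<Longrightarrow> E (f k) (f (Suc k))"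
    and "i \<le> j"
  shows "reach T E (f i) (f j)"
  using assms
proof (induction j)
  case 0 then show ?case by (simp add: reach_refl)
next
  case (Suc j)
  show ?case
  proof (cases "i = Suc j")
    case True then show ?thesis using Suc.prems(1) by (simp add: reach_refl)
  next
    case False
    then have ij: "i \<le> j" using Suc.prems(3) by simp
    have "reach T E (f i) (f j)" using Suc.IH Suc.prems ij by simp
    moreover have "reach T E (f j) (f (Suc j))"
      using Suc.prems ij by (intro reach_edge) auto
    ultimately show ?thesis by (rule reach_trans)
  qed
qed


lemma conn_clique:
  assumes sg: "sgraph V E" and CT: "C \<subseteq> T" and Cne: "C \<noteq> {}" and cl: "is_clique C E"
    and h: "\<forall>t\<in>T. \<exists>c\<in>C. reach T E t c"
  shows "connected_on T E"
proof -
  obtain c0 where c0: "c0 \<in> C" using Cne by blast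
  have r: "reach T E t c0" if tT: "t \<in> T" for t
  proof -
    obtain c where c: "c \<in> C" "reach T E t c" using h tT by blast
    have "reach T E c c0"
    proof (cases "c = c0")
      case True
      have "c \<in> T" using c(1) CT by blast
      then show ?thesis using True reach_refl by metis
    next
      case False
      have "E c c0" using cl c(1) c0 False unfolding is_clique_def by blast
      moreover have "c \<in> T" "c0 \<in> T" using c(1) c0 CT by blast+
      ultimately show ?thesis using reach_edge by metis
    qed
    then show ?thesis using reach_trans[OF c(2)] by blast
  qed
  have "reach T E a b" if "a \<in> T" "b \<in> T" for a b
    using r[OF that(1)] reach_sym[OF sg r[OF that(2)]] by (rule reach_trans)
  moreover have "T \<noteq> {}" using c0 CT by blast
  ultimately show ?thesis unfolding connected_on_def by blast
qed


lemma block_nbr: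
  assumes sg: "sgraph V E" and blk: "is_block V E B" and cl: "is_clique B E"
    and uB: "u \<in> B" and nc: "\<not> cutpoint V E u" and Euw: "E u w"
  shows "w \<in> B"
proof (rule ccontr)
  assume wB: "w \<notin> B"
  have BV: "B \<subseteq> V" and tc: "two_connected B E"
    and mx: "\<forall>B'. B \<subset> B' \<and> B' \<subseteq> V \<longrightarrow> \<not> two_connected B' E"
    using blk unfolding is_block_def by blast+
  have c3: "card B \<ge> 3" and fB: "finite B" using tc unfolding two_connected_def by blast+
  have Bu: "B - {u} \<noteq> {}"
  proof
    assume "B - {u} = {}"
    then have "B \<subseteq> {u}" by blast
    then have "card B \<le> 1" using card_mono[of "{u}" B] by simp
    then show False using c3 by simp
  qed
  then obtain b where b: "b \<in> B" "b \<noteq> u" by blast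
  have wV: "w \<in> V" "u \<in> V" using sg_in[OF sg Euw] by auto
  have wu: "w \<noteq> u" using wB uB by blast
  have bV: "b \<in> V" using b BV by blast
  have Ewu: "E w u" using sg_sym[OF sg Euw] .
  have Eub: "E u b" using cl uB b unfolding is_clique_def by auto
  have r1: "reach V E w u" using wV Ewu by (intro reach_edge) auto
  have r2: "reach V E u b" using wV bV Eub by (intro reach_edge) auto
  have "reach V E w b" using reach_trans[OF r1 r2] .
  then have r: "reach (V - {u}) E w b" using nc wV bV wu b(2) unfolding cutpoint_def by blast
  let ?R = "{(x,y). x \<in> V - {u} \<and> y \<in> V - {u} \<and> E x y}"
  have "(w,b) \<in> ?R\<^sup>*" using r unfolding reach_def by blast
  then obtain N where "(w,b) \<in> ?R ^^ N" using rtrancl_power by blast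
  then obtain g where g: "g 0 = w" "g N = b" "\<forall>i<N. (g i, g (Suc i)) \<in> ?R"
    unfolding relpow_fun_conv by blast
  define Pth where "Pth m f \<longleftrightarrow> f 0 = w \<and> f m \<in> B - {u} \<and> (\<forall>i<m. f i \<in> V - B \<and> E (f i) (f (Suc i)))"
    for m f
  define n0 where "n0 = (LEAST i. g i \<in> B)"
  have gNB: "g N \<in> B" using g b by simp
  have n0B: "g n0 \<in> B" unfolding n0_def using gNB by (rule LeastI)
  have n0N: "n0 \<le> N" unfolding n0_def using gNB by (rule Least_le)
  have nb: "g i \<notin> B" if "i < n0" for i
    using not_less_Least[of i "\<lambda>i. g i \<in> B"] that unfolding n0_def by blast
  have gV: "g i \<in> V - {u} \<and> E (g i) (g (Suc i))" if "i < N" for i using g(3) that by blast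
  have gn0u: "g n0 \<noteq> u"
  proof (cases "n0 < N")
    case True then show ?thesis using gV by blast
  next
    case False then have "n0 = N" using n0N by simp
    then show ?thesis using g(2) b(2) by simp
  qed
  have "Pth n0 g" unfolding Pth_def
  proof (intro conjI allI impI)
    show "g 0 = w" by (rule g(1))
    show "g n0 \<in> B - {u}" using n0B gn0u by blast
    fix i assume i: "i < n0"
    then have iN: "i < N" using n0N by simp
    show "g i \<in> V - B" using gV[OF iN] nb[OF i] by blast
    show "E (g i) (g (Suc i))" using gV[OF iN] by blast
  qed
  then have ex: "\<exists>m f. Pth m f" by blast
  define n where "n = (LEAST m. \<exists>f. Pth m f)"
  have "\<exists>f. Pth n f" unfolding n_def using ex by (rule LeastI_ex)
  then obtain f where f: "Pth n f" by blast
  have minl: "\<not> (\<exists>f. Pth m f)" if "m < n" for m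
    using not_less_Least[of m "\<lambda>m. \<exists>f. Pth m f"] that unfolding n_def by blast
  have f0: "f 0 = w" and fnB: "f n \<in> B" and fnu: "f n \<noteq> u" using f unfolding Pth_def by auto
  have fi: "f i \<in> V - B" if "i < n" for i using f that unfolding Pth_def by blast
  have fe: "E (f i) (f (Suc i))" if "i < n" for i using f that unfolding Pth_def by blast
  have n0: "0 < n"
  proof (rule ccontr)
    assume "\<not> 0 < n" then have "n = 0" by simp
    then show False using f0 fnB wB by simp
  qed
  have inj: "f i \<noteq> f k" if ik: "i < k" "k \<le> n" for i k
  proof
    assume eq: "f i = f k"
    define d where "d = k - i"
    define h where "h m = (if m \<le> i then f m else f (m + d))" for m
    have "Pth (n - d) h" unfolding Pth_def
    proof (intro conjI allI impI)
      show "h 0 = w" using f0 by (simp add: h_def)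
      show "h (n - d) \<in> B - {u}"
      proof (cases "n - d \<le> i")
        case True then have "n = k" "n - d = i" using ik d_def by linarith+
        then show ?thesis using eq fnB fnu by (simp add: h_def)
      next
        case False then have "n - d + d = n" using ik d_def by linarith
        then show ?thesis using False fnB fnu by (simp add: h_def)
      qed
      fix m assume m: "m < n - d"
      show "h m \<in> V - B"
      proof (cases "m \<le> i")
        case True then show ?thesis using fi[of m] ik by (simp add: h_def)
      next
        case False then show ?thesis using fi[of "m + d"] m ik d_def by (simp add: h_def)
      qed
      show "E (h m) (h (Suc m))"
      proof (cases "Suc m \<le> i")
        case True then show ?thesis using fe[of m] ik by (simp add: h_def)
      next
        case False
        show ?thesis
        proof (cases "m = i")
          case True
          then have "h m = f k" "h (Suc m) = f (Suc k)" using eq ik d_def by (simp_all add: h_def)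
          moreover have "k < n" using True m d_def ik by linarith
          ultimately show ?thesis using fe[of k] by simp
        next
          case False2: False
          then have "h m = f (m + d)" "h (Suc m) = f (Suc (m + d))" using False by (simp_all add: h_def)
          moreover have "m + d < n" using m d_def ik by linarith
          ultimately show ?thesis using fe[of "m + d"] by simp
        qed
      qed
    qed
    moreover have "n - d < n" using ik d_def n0 by auto
    ultimately show False using minl by blast
  qed
  define S where "S = B \<union> f ` {..<n}"
  have SV: "S \<subseteq> V" using BV fi unfolding S_def by auto
  have wS: "w \<in> S" using f0 n0 unfolding S_def by force
  have BS: "B \<subset> S" using wS wB unfolding S_def by blast
  have fS: "f k \<in> S" if "k \<le> n" for k
  proof (cases "k < n")
    case True then show ?thesis unfolding S_def by blast
  next
    case False then have "k = n" using that by simp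
    then show ?thesis using fnB unfolding S_def by blast
  qed
  have finS: "finite S" using fB unfolding S_def by simp
  have Sel: "t \<in> B \<or> (\<exists>i<n. t = f i)" if "t \<in> S" for t using that unfolding S_def by blast
  have uS: "u \<in> S" using uB unfolding S_def by blast
  have "two_connected S E"
  proof -
    have "card S \<ge> 3" using c3 card_mono[OF finS] BS by (meson order.trans psubset_imp_subset)
    moreover have "connected_on S E"
    proof (rule conn_clique[OF sg _ _ cl])
      show "B \<subseteq> S" using BS by blast
      show "B \<noteq> {}" using uB by blast
      show "\<forall>t\<in>S. \<exists>c\<in>B. reach S E t c"
      proof
        fix t assume "t \<in> S"
        then consider "t \<in> B" | i where "i < n" "t = f i" using Sel by blast
        then show "\<exists>c\<in>B. reach S E t c"
        proof cases
          case 1 then show ?thesis using reach_refl[of t S E] BS by blast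
        next
          case 2
          have "reach S E (f i) (f n)"
            by (rule reach_path) (use fS fe 2 in auto)
          then show ?thesis using 2 fnB by blast
        qed
      qed
    qed
    moreover have "connected_on (S - {x}) E" if xS: "x \<in> S" for x
    proof (cases "x \<in> B")
      case xB: True
      let ?T = "S - {x}"
      show ?thesis
      proof (rule conn_clique[OF sg, of "B - {x}"])
        show "B - {x} \<subseteq> ?T" using BS by blast
        have "card (B - {x}) \<ge> 2" using c3 fB xB by (simp add: card_Diff_singleton)
        then show "B - {x} \<noteq> {}" by (metis card.empty not_numeral_le_zero)
        show "is_clique (B - {x}) E" using cl unfolding is_clique_def by blast
        show "\<forall>t\<in>?T. \<exists>c\<in>B - {x}. reach ?T E t c"
        proof
          fix t assume tT: "t \<in> ?T"
          then consider "t \<in> B" | i where "i < n" "t = f i" using Sel by blast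
          then show "\<exists>c\<in>B - {x}. reach ?T E t c"
          proof cases
            case 1 then show ?thesis using reach_refl[of t ?T E] tT by blast
          next
            case 2
            show ?thesis
            proof (cases "f n = x")
              case False
              have "reach ?T E (f i) (f n)"
              proof (rule reach_path)
                fix k assume "i \<le> k" "k \<le> n"
                then show "f k \<in> ?T" using fS fi False xB by (cases "k < n") auto
              qed (use fe 2 in auto)
              then show ?thesis using 2 fnB False by blast
            next
              case True
              have ux: "u \<noteq> x" using True fnu by simp
              have "reach ?T E (f 0) (f i)"
              proof (rule reach_path)
                fix k assume "0 \<le> k" "k \<le> i"
                then show "f k \<in> ?T" using fS fi xB 2 by auto
              qed (use fe 2 in auto)
              then have "reach ?T E w (f i)" using f0 by simp
              then have "reach ?T E (f i) w" using reach_sym[OF sg] by blast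
              moreover have "reach ?T E w u"
                using wS uS ux Ewu xB wB by (intro reach_edge) auto
              ultimately have "reach ?T E (f i) u" by (rule reach_trans)
              then show ?thesis using 2 uB ux by blast
            qed
          qed
        qed
      qed
    next
      case xB: False
      then obtain j where j: "j < n" "x = f j" using Sel xS by blast
      let ?T = "S - {x}"
      show ?thesis
      proof (rule conn_clique[OF sg _ _ cl])
        show "B \<subseteq> ?T" using BS xB by blast
        show "B \<noteq> {}" using uB by blast
        show "\<forall>t\<in>?T. \<exists>c\<in>B. reach ?T E t c"
        proof
          fix t assume tT: "t \<in> ?T"
          then consider "t \<in> B" | i where "i < n" "t = f i" using Sel by blast
          then show "\<exists>c\<in>B. reach ?T E t c"
          proof cases
            case 1 then show ?thesis using reach_refl[of t ?T E] tT by blast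
          next
            case 2
            have ij: "i \<noteq> j" using 2 j tT by blast
            show ?thesis
            proof (cases "i < j")
              case True
              have "reach ?T E (f 0) (f i)"
              proof (rule reach_path)
                fix k assume "0 \<le> k" "k \<le> i"
                then have "f k \<noteq> f j" using inj[of k j] True j by simp
                then show "f k \<in> ?T" using fS[of k] \<open>k \<le> i\<close> 2 j by simp
              qed (use fe 2 in auto)
              then have "reach ?T E w (f i)" using f0 by simp
              then have "reach ?T E (f i) w" using reach_sym[OF sg] by blast
              moreover have "reach ?T E w u"
              proof -
                have "f 0 \<noteq> f j" using inj[of 0 j] True j by simp
                then show ?thesis using wS uS Ewu uB xB wu j f0 by (intro reach_edge) auto
              qed
              ultimately have "reach ?T E (f i) u" by (rule reach_trans)
              then show ?thesis using uB 2 by blast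
            next
              case False
              then have ji: "j < i" using ij by simp
              have "reach ?T E (f i) (f n)"
              proof (rule reach_path)
                fix k assume "i \<le> k" "k \<le> n"
                then have "f j \<noteq> f k" using inj[of j k] ji by simp
                then show "f k \<in> ?T" using fS[of k] \<open>k \<le> n\<close> j by simp
              qed (use fe 2 in auto)
              then show ?thesis using fnB 2 by blast
            qed
          qed
        qed
      qed
    qed
    ultimately show ?thesis unfolding two_connected_def using finS by blast
  qed
  then show False using mx BS SV by blast
qed


lemma edge_restrict: "g \<in> edges V E \<Longrightarrow> g \<subseteq> W \<Longrightarrow> g \<in> edges W E"
  unfolding edges_iff by blast

lemma edge_two: "sgraph V E \<Longrightarrow> g \<in> edges W E \<Longrightarrow> card g = 2"
  unfolding edges_iff using sg_irr by fastforce

lemma edge_sub: "g \<in> edges W E \<Longrightarrow> g \<subseteq> W"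
  unfolding edges_iff by blast

lemma edge_ne: "g \<in> edges W E \<Longrightarrow> g \<noteq> {}"
  unfolding edges_iff by blast

lemma IM_sepD: "sgraph V E \<Longrightarrow> induced_matching W E M \<Longrightarrow> e \<in> M \<Longrightarrow> f \<in> M \<Longrightarrow> e \<noteq> f \<Longrightarrow> sep E e f"
  unfolding IM_char by blast

lemma IM_edgeD: "sgraph V E \<Longrightarrow> induced_matching W E M \<Longrightarrow> e \<in> M \<Longrightarrow> e \<in> edges W E"
  unfolding IM_char by blast

lemma IM_insertI: "sgraph V E \<Longrightarrow> induced_matching W E M \<Longrightarrow> g \<in> edges W E \<Longrightarrow>
   (\<And>f. f \<in> M \<Longrightarrow> f \<noteq> g \<Longrightarrow> sep E g f) \<Longrightarrow> induced_matching W E (insert g M)"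
  by (simp add: IM_insert)

lemma IM_insertD: "sgraph V E \<Longrightarrow> induced_matching W E (insert g M) \<Longrightarrow> f \<in> M \<Longrightarrow> f \<noteq> g \<Longrightarrow> sep E g f"
  by (simp add: IM_insert)

locale PB =
  fixes V :: "'a set" and E :: "'a \<Rightarrow> 'a \<Rightarrow> bool" and B :: "'a set" and v :: 'a
  assumes sg: "sgraph V E" and BV: "B \<subseteq> V" and cl: "is_clique B E" and vB: "v \<in> B"
    and K: "\<And>a y. a \<in> B - {v} \<Longrightarrow> E a y \<Longrightarrow> y \<in> B" and c3: "card B \<ge> 3"
begin

lemma sep_clique:
  assumes "sep E g e" "e \<subseteq> B" "e \<noteq> {}"
  shows "g \<inter> B = {}"
proof (rule ccontr)
  assume "g \<inter> B \<noteq> {}"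
  then obtain a where a: "a \<in> g" "a \<in> B" by blast
  obtain x where x: "x \<in> e" using assms(3) by blast
  have "a \<noteq> x" using assms(1) a x unfolding sep_def by blast
  then have "E a x" using cl a x assms(2) unfolding is_clique_def by blast
  then show False using assms(1) a x unfolding sep_def by blast
qed

lemma L1:
  assumes eA: "e \<subseteq> B - {v}" and e2: "card e = 2" and M': "M' \<in> MIM (V - B) E"
  shows "insert e M' \<in> MIM V E"
proof -
  obtain x y where e: "e = {x,y}" "x \<noteq> y" using e2 by (meson card_2_iff)
  have xyB: "x \<in> B" "y \<in> B" using e eA by blast+
  have "E x y" using cl xyB e(2) unfolding is_clique_def by blast
  then have eE: "e \<in> edges V E" using e xyB BV unfolding edges_iff by blast
  have imW: "induced_matching (V - B) E M'" and mxW: "\<forall>g\<in>edges (V - B) E. g \<notin> M' \<longrightarrow> \<not> induced_matching (V - B) E (insert g M')"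
    using M' unfolding MIM_def MAX_char[OF sg] by blast+
  have UM: "\<Union>M' \<subseteq> V - B" using IM_sub[OF sg imW] .
  have imV: "induced_matching V E M'" using IM_up[OF sg imW] by blast
  have eM: "e \<notin> M'" using UM e xyB by blast
  have sepf: "sep E e f" if "f \<in> M'" for f
  proof -
    have fB: "f \<subseteq> V - B" using that UM by blast
    have "\<not> E a b" if "a \<in> e" "b \<in> f" for a b
      using K[of a b] eA fB that by blast
    then show ?thesis unfolding sep_def using fB eA by blast
  qed
  have im: "induced_matching V E (insert e M')"
    using imV eE sepf unfolding IM_insert[OF sg] by blast
  have "\<not> induced_matching V E (insert g (insert e M'))" if g: "g \<in> edges V E" "g \<notin> insert e M'" for g
  proof
    assume h: "induced_matching V E (insert g (insert e M'))"
    have "sep E g e" using h g unfolding IM_insert[OF sg] by blast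
    moreover have "e \<noteq> {}" using e by blast
    ultimately have gB: "g \<inter> B = {}" using sep_clique eA by blast
    have "g \<subseteq> V" by (rule edge_sub[OF g(1)])
    then have gV: "g \<subseteq> V - B" using gB by auto
    have i1: "induced_matching V E (insert g M')" using IM_mono[OF sg h, of "insert g M'"] by blast
    have "\<Union>(insert g M') \<subseteq> V - B" using UM gV by auto
    then have "induced_matching (V - B) E (insert g M')"
      using IM_down[OF sg i1] by blast
    moreover have "g \<in> edges (V - B) E" using edge_restrict[OF g(1) gV] .
    ultimately show False using mxW g by blast
  qed
  then show ?thesis using im unfolding MIM_def MAX_char[OF sg] by blast
qed

lemma L2:
  assumes M: "M \<in> MIM V E" and eM: "e \<in> M" and eA: "e \<subseteq> B - {v}"
  shows "M - {e} \<in> MIM (V - B) E"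
proof -
  have im: "induced_matching V E M" and mx: "\<forall>g\<in>edges V E. g \<notin> M \<longrightarrow> \<not> induced_matching V E (insert g M)"
    using M unfolding MIM_def MAX_char[OF sg] by blast+
  have eE: "e \<in> edges V E" using im eM unfolding IM_char[OF sg] by blast
  have ene: "e \<noteq> {}" using edge_ne[OF eE] .
  have fsub: "f \<subseteq> V - B" if "f \<in> M - {e}" for f
  proof -
    have "sep E e f" using im eM that unfolding IM_char[OF sg] by blast
    then have "sep E f e" using sep_sym[OF sg] by blast
    then have "f \<inter> B = {}" using sep_clique eA ene by blast
    moreover have "f \<subseteq> V" using im that edge_sub unfolding IM_char[OF sg] by blast
    ultimately show ?thesis by blast
  qed
  have i1: "induced_matching V E (M - {e})" using IM_mono[OF sg im, of "M - {e}"] by blast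
  have "\<Union>(M - {e}) \<subseteq> V - B" using fsub by blast
  then have im1: "induced_matching (V - B) E (M - {e})"
    using IM_down[OF sg i1] by blast
  have "\<not> induced_matching (V - B) E (insert g (M - {e}))"
    if g: "g \<in> edges (V - B) E" "g \<notin> M - {e}" for g
  proof
    assume h: "induced_matching (V - B) E (insert g (M - {e}))"
    have gVB: "g \<subseteq> V - B" using edge_sub[OF g(1)] .
    have ge: "g \<noteq> e" using gVB eA ene by blast
    then have gM: "g \<notin> M" using g by blast
    have gV: "g \<in> edges V E" using g(1) unfolding edges_iff by blast
    have hV: "induced_matching V E (insert g (M - {e}))" using IM_up[OF sg h] by blast
    have sepf: "sep E e f" if f: "f \<in> insert g (M - {e})" "f \<noteq> e" for f
    proof (cases "f = g")
      case True
      have "\<not> E a b" if "a \<in> e" "b \<in> g" for a b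
        using K[of a b] eA gVB that by blast
      then show ?thesis unfolding sep_def using gVB eA True by blast
    next
      case False
      then have "f \<in> M" using f by blast
      then show ?thesis using im eM f(2) unfolding IM_char[OF sg] by blast
    qed
    have "induced_matching V E (insert e (insert g (M - {e})))"
      using hV eE sepf unfolding IM_insert[OF sg] by blast
    moreover have "insert e (insert g (M - {e})) = insert g M" using eM by blast
    ultimately show False using mx gV gM by metis
  qed
  then show ?thesis using im1 unfolding MIM_def MAX_char[OF sg] by blast
qed


abbreviation W where "W p \<equiv> V - (cnbhd V E v \<union> cnbhd V E p)"

lemma W_iff: "y \<in> W p \<longleftrightarrow> y \<in> V \<and> y \<noteq> v \<and> \<not> E v y \<and> y \<noteq> p \<and> \<not> E p y"
  by (auto simp: cnbhd_def nbhd_def)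

lemma W_sub: "W p \<subseteq> V" by blast

lemma sep_W:
  assumes "f \<subseteq> W p"
  shows "sep E {v,p} f"
  using assms unfolding sep_def by (auto simp: cnbhd_def nbhd_def)

lemma W_of_sep:
  assumes "sep E g {v,p}" "g \<subseteq> V"
  shows "g \<subseteq> W p"
proof
  fix a assume a: "a \<in> g"
  have "a \<noteq> v" "a \<noteq> p" "\<not> E a v" "\<not> E a p" using assms(1) a unfolding sep_def by blast+
  moreover have "\<not> E v a" "\<not> E p a" using calculation(3,4) sg_sym[OF sg] by blast+
  ultimately show "a \<in> W p" using a assms(2) unfolding W_iff by blast
qed

lemma L3:
  assumes p: "p \<in> nbhd V E v" and M': "M' \<in> MIM (W p) E"
  shows "insert {v,p} M' \<in> MIM V E"
proof -
  have Evp: "E v p" and pV: "p \<in> V" using p unfolding nbhd_def by blast+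
  have vV: "v \<in> V" using vB BV by blast
  have eE: "{v,p} \<in> edges V E" using Evp pV vV unfolding edges_iff by blast
  have imW: "induced_matching (W p) E M'" and mxW: "\<forall>g\<in>edges (W p) E. g \<notin> M' \<longrightarrow> \<not> induced_matching (W p) E (insert g M')"
    using M' unfolding MIM_def MAX_char[OF sg] by blast+
  have UM: "\<Union>M' \<subseteq> W p" using IM_sub[OF sg imW] .
  have imV: "induced_matching V E M'" using IM_up[OF sg imW W_sub] .
  have vW: "v \<notin> W p" unfolding W_iff by blast
  have eM: "{v,p} \<notin> M'" using UM vW by blast
  have sepf: "sep E {v,p} f" if "f \<in> M'" for f
    using sep_W[of f p] that UM by blast
  have im: "induced_matching V E (insert {v,p} M')"
    unfolding IM_insert[OF sg] using imV eE sepf by simp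
  have "\<not> induced_matching V E (insert g (insert {v,p} M'))" if g: "g \<in> edges V E" "g \<notin> insert {v,p} M'" for g
  proof
    assume h: "induced_matching V E (insert g (insert {v,p} M'))"
    have ne: "{v,p} \<noteq> g" using g(2) by auto
    have sg1: "sep E g {v,p}" by (rule IM_insertD[OF sg h insertI1 ne])
    have "g \<subseteq> V" by (rule edge_sub[OF g(1)])
    then have gW: "g \<subseteq> W p" using W_of_sep[OF sg1] by blast
    have i1: "induced_matching V E (insert g M')" using IM_mono[OF sg h, of "insert g M'"] by blast
    have "\<Union>(insert g M') \<subseteq> W p" using UM gW by auto
    then have "induced_matching (W p) E (insert g M')"
      using IM_down[OF sg i1] by blast
    moreover have "g \<in> edges (W p) E" using edge_restrict[OF g(1) gW] .
    ultimately show False using mxW g by blast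
  qed
  then show ?thesis using im unfolding MIM_def MAX_char[OF sg] by blast
qed

lemma L4:
  assumes M: "M \<in> MIM V E" and eM: "{v,p} \<in> M"
  shows "p \<in> nbhd V E v \<and> M - {{v,p}} \<in> MIM (W p) E"
proof -
  have im: "induced_matching V E M" and mx: "\<forall>g\<in>edges V E. g \<notin> M \<longrightarrow> \<not> induced_matching V E (insert g M)"
    using M unfolding MIM_def MAX_char[OF sg] by blast+
  have eE: "{v,p} \<in> edges V E" by (rule IM_edgeD[OF sg im eM])
  then obtain a b where ab: "{v,p} = {a,b}" "a \<in> V" "b \<in> V" "E a b" unfolding edges_iff by blast
  have "a \<noteq> b" using sg_irr[OF sg ab(4)] .
  then have "(v = a \<and> p = b) \<or> (v = b \<and> p = a)" using ab(1) by (metis doubleton_eq_iff insert_absorb2 singleton_insert_inj_eq)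
  then have Evp: "E v p" and pV: "p \<in> V" using ab sg_sym[OF sg] by blast+
  have pN: "p \<in> nbhd V E v" using Evp pV unfolding nbhd_def by blast
  have fsub: "f \<subseteq> W p" if "f \<in> M - {{v,p}}" for f
  proof -
    have fM: "f \<in> M" and nf: "{v,p} \<noteq> f" using that by auto
    have "sep E {v,p} f" by (rule IM_sepD[OF sg im eM fM nf])
    then have "sep E f {v,p}" using sep_sym[OF sg] by blast
    moreover have "f \<subseteq> V" using edge_sub[OF IM_edgeD[OF sg im fM]] .
    ultimately show ?thesis using W_of_sep by blast
  qed
  have i1: "induced_matching V E (M - {{v,p}})" using IM_mono[OF sg im, of "M - {{v,p}}"] by blast
  have "\<Union>(M - {{v,p}}) \<subseteq> W p" using fsub by blast
  then have im1: "induced_matching (W p) E (M - {{v,p}})"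
    using IM_down[OF sg i1] by blast
  have "\<not> induced_matching (W p) E (insert g (M - {{v,p}}))"
    if g: "g \<in> edges (W p) E" "g \<notin> M - {{v,p}}" for g
  proof
    assume h: "induced_matching (W p) E (insert g (M - {{v,p}}))"
    have gW: "g \<subseteq> W p" using edge_sub[OF g(1)] .
    have vW: "v \<notin> W p" unfolding W_iff by blast
    have ge: "g \<noteq> {v,p}" using gW vW by blast
    then have gM: "g \<notin> M" using g by blast
    have gV: "g \<in> edges V E" using g(1) unfolding edges_iff by blast
    have hV: "induced_matching V E (insert g (M - {{v,p}}))" using IM_up[OF sg h W_sub] .
    have sepf: "sep E {v,p} f" if f: "f \<in> insert g (M - {{v,p}})" "f \<noteq> {v,p}" for f
    proof (cases "f = g")
      case True
      then show ?thesis using sep_W[OF gW] by simp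
    next
      case False
      then have "f \<in> M" using f by blast
      moreover have "{v,p} \<noteq> f" using f(2) by auto
      ultimately show ?thesis using IM_sepD[OF sg im eM] by blast
    qed
    have "induced_matching V E (insert {v,p} (insert g (M - {{v,p}})))"
      by (rule IM_insertI[OF sg hV eE sepf])
    moreover have "insert {v,p} (insert g (M - {{v,p}})) = insert g M" using eM by blast
    ultimately show False using mx gV gM by metis
  qed
  then show ?thesis using im1 pN unfolding MIM_def MAX_char[OF sg] by blast
qed

lemma L5:
  assumes M: "M \<in> MIM V E"
  shows "(\<exists>e\<in>M. e \<subseteq> B - {v}) \<or> (\<exists>p. {v,p} \<in> M)"
proof (rule ccontr)
  assume nh: "\<not> ((\<exists>e\<in>M. e \<subseteq> B - {v}) \<or> (\<exists>p. {v,p} \<in> M))"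
  have n1: "\<And>p. {v,p} \<notin> M" using nh by auto
  have n2: "\<And>e. e \<in> M \<Longrightarrow> \<not> e \<subseteq> B - {v}" using nh by auto
  have im: "induced_matching V E M" and mx: "\<forall>g\<in>edges V E. g \<notin> M \<longrightarrow> \<not> induced_matching V E (insert g M)"
    using M unfolding MIM_def MAX_char[OF sg] by blast+
  have fB: "finite B" using c3 by (metis card.infinite not_numeral_le_zero)
  have c2: "card (B - {v}) \<ge> 2" using c3 fB vB by (simp add: card_Diff_singleton)
  have "\<not> (\<forall>x\<in>B - {v}. \<forall>y\<in>B - {v}. x = y)"
    using card_le_Suc0_iff_eq[of "B - {v}"] fB c2 by auto
  then obtain x y where xy: "x \<in> B - {v}" "y \<in> B - {v}" "x \<noteq> y" by blast
  have "E x y" using cl xy unfolding is_clique_def by blast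
  then have gE: "{x,y} \<in> edges V E" using xy BV unfolding edges_iff by blast
  have gM: "{x,y} \<notin> M"
  proof
    assume "{x,y} \<in> M"
    moreover have "{x,y} \<subseteq> B - {v}" using xy by simp
    ultimately show False using n2 by metis
  qed
  have sepf: "sep E {x,y} f" if f: "f \<in> M" "f \<noteq> {x,y}" for f
  proof -
    have "f \<in> edges V E" by (rule IM_edgeD[OF sg im f(1)])
    then obtain a b where ab: "f = {a,b}" "E a b" unfolding edges_iff by blast
    have Eba: "E b a" using sg_sym[OF sg ab(2)] .
    have fB: "f \<inter> B = {}"
    proof (rule ccontr)
      assume "f \<inter> B \<noteq> {}"
      then have "a \<in> B \<or> b \<in> B" using ab by blast
      moreover have "a \<noteq> v" using n1 ab f by metis
      moreover have "b \<noteq> v" using n1 ab f by (metis insert_commute)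
      ultimately have "a \<in> B \<and> b \<in> B" using K ab(2) Eba by blast
      then have "f \<subseteq> B - {v}" using ab \<open>a \<noteq> v\<close> \<open>b \<noteq> v\<close> by blast
      then show False using n2 f by metis
    qed
    have "\<not> E c d" if "c \<in> {x,y}" "d \<in> f" for c d
      using K[of c d] xy fB that by blast
    then show ?thesis unfolding sep_def using fB xy by blast
  qed
  have "induced_matching V E (insert {x,y} M)"
    by (rule IM_insertI[OF sg im gE sepf])
  then show False using mx gE gM by blast
qed

end


lemma UMIM:
  assumes "sgraph V E" "M \<in> MIM W E" shows "\<Union>M \<subseteq> W"
proof -
  have "induced_matching W E M" using assms(2) unfolding MIM_def maximal_induced_matching_def by blast
  then show ?thesis by (rule IM_sub[OF assms(1)])
qed

context PB
begin

lemma count: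
  "card (MIM V E) = (card (B - {v}) choose 2) * card (MIM (V - B) E)
     + (\<Sum>p\<in>nbhd V E v. card (MIM (W p) E))"
proof -
  define A where "A = B - {v}"
  define P where "P = {e. e \<subseteq> A \<and> card e = 2}"
  define N where "N = nbhd V E v"
  define XA where "XA = (\<Union>e\<in>P. insert e ` MIM (V - B) E)"
  define XB where "XB = (\<Union>p\<in>N. insert {v,p} ` MIM (W p) E)"
  have fV: "finite V" using sg unfolding sgraph_def by blast
  have fB: "finite B" using BV fV finite_subset by blast
  have fA: "finite A" using fB unfolding A_def by simp
  have fP: "finite P" unfolding P_def using fA by simp
  have fN: "finite N" unfolding N_def nbhd_def using fV by simp
  have vA: "v \<notin> A" unfolding A_def by blast
  have AB: "A \<subseteq> B" unfolding A_def by blast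
  have notinA: "e \<notin> M1" if "e \<in> P" "M1 \<in> MIM (V - B) E" for e M1
  proof
    assume "e \<in> M1"
    then have "e \<subseteq> V - B" using UMIM[OF sg that(2)] by blast
    moreover have "e \<subseteq> B" "e \<noteq> {}" using that(1) AB unfolding P_def by auto
    ultimately show False by blast
  qed
  have vW: "v \<notin> W p" for p unfolding W_iff by blast
  have notinB: "{v,p} \<notin> M1" if "M1 \<in> MIM (W p) E" for p M1
  proof
    assume "{v,p} \<in> M1"
    then have "v \<in> W p" using UMIM[OF sg that] by blast
    then show False using vW by blast
  qed
  have eq: "MIM V E = XA \<union> XB"
  proof (intro equalityI subsetI)
    fix M assume M: "M \<in> MIM V E"
    have im: "induced_matching V E M"
      using M unfolding MIM_def maximal_induced_matching_def by blast
    from L5[OF M] show "M \<in> XA \<union> XB"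
    proof
      assume "\<exists>e\<in>M. e \<subseteq> B - {v}"
      then obtain e where e: "e \<in> M" "e \<subseteq> A" unfolding A_def by blast
      have "card e = 2" using edge_two[OF sg IM_edgeD[OF sg im e(1)]] .
      then have eP: "e \<in> P" using e unfolding P_def by blast
      have "M - {e} \<in> MIM (V - B) E" using L2[OF M e(1)] e(2) unfolding A_def by blast
      moreover have "M = insert e (M - {e})" using e(1) by blast
      ultimately have "M \<in> insert e ` MIM (V - B) E" by blast
      then show ?thesis using eP unfolding XA_def by blast
    next
      assume "\<exists>p. {v,p} \<in> M"
      then obtain p where p: "{v,p} \<in> M" by blast
      have "p \<in> N" and M1: "M - {{v,p}} \<in> MIM (W p) E" using L4[OF M p] unfolding N_def by blast+
      moreover have "M = insert {v,p} (M - {{v,p}})" using p by blast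
      ultimately have "M \<in> insert {v,p} ` MIM (W p) E" by blast
      then show ?thesis using \<open>p \<in> N\<close> unfolding XB_def by blast
    qed
  next
    fix M assume "M \<in> XA \<union> XB"
    then show "M \<in> MIM V E"
    proof
      assume "M \<in> XA"
      then obtain e M1 where "e \<in> P" "M1 \<in> MIM (V - B) E" "M = insert e M1" unfolding XA_def by blast
      then show ?thesis using L1[of e M1] unfolding P_def A_def by blast
    next
      assume "M \<in> XB"
      then obtain p M1 where "p \<in> N" "M1 \<in> MIM (W p) E" "M = insert {v,p} M1" unfolding XB_def by blast
      then show ?thesis using L3[of p M1] unfolding N_def by blast
    qed
  qed
  have dis: "XA \<inter> XB = {}"
  proof (rule ccontr)
    assume "XA \<inter> XB \<noteq> {}"
    then obtain M where MA: "M \<in> XA" and MB: "M \<in> XB" by blast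
    from MA obtain e M1 where e: "e \<in> P" "M1 \<in> MIM (V - B) E" "M = insert e M1"
      unfolding XA_def by blast
    from MB obtain p M2 where p: "p \<in> N" "M2 \<in> MIM (W p) E" "M = insert {v,p} M2"
      unfolding XB_def by blast
    have "{v,p} \<in> insert e M1" using e(3) p(3) by (metis insertI1)
    then have "{v,p} = e \<or> {v,p} \<in> M1" by (rule insertE) simp_all
    then show False
    proof
      assume "{v,p} = e"
      then have "v \<in> A" using e(1) unfolding P_def by blast
      then show False using vA by blast
    next
      assume "{v,p} \<in> M1"
      then have "v \<in> V - B" using UMIM[OF sg e(2)] by blast
      then show False using vB by blast
    qed
  qed
  have fMB: "finite (MIM (V - B) E)" using finite_MIM fV by blast
  have fMW: "finite (MIM (W p) E)" for p using finite_MIM fV by blast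
  have cA: "card XA = card P * card (MIM (V - B) E)"
  proof -
    have "card XA = (\<Sum>e\<in>P. card (insert e ` MIM (V - B) E))"
      unfolding XA_def
    proof (rule card_UN_disjoint[OF fP])
      show "\<forall>e\<in>P. finite (insert e ` MIM (V - B) E)" using fMB by blast
      show "\<forall>e1\<in>P. \<forall>e2\<in>P. e1 \<noteq> e2 \<longrightarrow> insert e1 ` MIM (V - B) E \<inter> insert e2 ` MIM (V - B) E = {}"
      proof (intro ballI impI)
        fix e1 e2 assume h: "e1 \<in> P" "e2 \<in> P" "e1 \<noteq> e2"
        show "insert e1 ` MIM (V - B) E \<inter> insert e2 ` MIM (V - B) E = {}"
        proof (rule ccontr)
          assume "insert e1 ` MIM (V - B) E \<inter> insert e2 ` MIM (V - B) E \<noteq> {}"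
          then obtain M1 M2 where m: "M1 \<in> MIM (V - B) E" "M2 \<in> MIM (V - B) E" "insert e1 M1 = insert e2 M2"
            by blast
          then have "e2 \<in> insert e1 M1" by blast
          then have "e2 \<in> M1" using h(3) by blast
          then show False using notinA[OF h(2) m(1)] by blast
        qed
      qed
    qed
    also have "\<dots> = (\<Sum>e\<in>P. card (MIM (V - B) E))"
    proof (rule sum.cong[OF refl])
      fix e assume eP: "e \<in> P"
      have "inj_on (insert e) (MIM (V - B) E)"
      proof (rule inj_onI)
        fix M1 M2 assume "M1 \<in> MIM (V - B) E" "M2 \<in> MIM (V - B) E" "insert e M1 = insert e M2"
        then show "M1 = M2" using notinA[OF eP] insert_ident by metis
      qed
      then show "card (insert e ` MIM (V - B) E) = card (MIM (V - B) E)" by (rule card_image)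
    qed
    also have "\<dots> = card P * card (MIM (V - B) E)" by simp
    finally show ?thesis .
  qed
  have cB: "card XB = (\<Sum>p\<in>N. card (MIM (W p) E))"
  proof -
    have "card XB = (\<Sum>p\<in>N. card (insert {v,p} ` MIM (W p) E))"
      unfolding XB_def
    proof (rule card_UN_disjoint[OF fN])
      show "\<forall>p\<in>N. finite (insert {v,p} ` MIM (W p) E)" using fMW by blast
      show "\<forall>p1\<in>N. \<forall>p2\<in>N. p1 \<noteq> p2 \<longrightarrow> insert {v,p1} ` MIM (W p1) E \<inter> insert {v,p2} ` MIM (W p2) E = {}"
      proof (intro ballI impI)
        fix p1 p2 assume h: "p1 \<in> N" "p2 \<in> N" "p1 \<noteq> p2"
        show "insert {v,p1} ` MIM (W p1) E \<inter> insert {v,p2} ` MIM (W p2) E = {}"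
        proof (rule ccontr)
          assume "insert {v,p1} ` MIM (W p1) E \<inter> insert {v,p2} ` MIM (W p2) E \<noteq> {}"
          then obtain M1 M2 where m: "M1 \<in> MIM (W p1) E" "M2 \<in> MIM (W p2) E" "insert {v,p1} M1 = insert {v,p2} M2"
            by blast
          then have "{v,p2} \<in> insert {v,p1} M1" by (metis insertI1)
          moreover have "{v,p2} \<noteq> {v,p1}"
          proof
            assume "{v,p2} = {v,p1}"
            then have "p2 \<in> {v,p1}" by (metis insert_iff)
            moreover have "p2 \<noteq> v" using h(2) sg_irr[OF sg] unfolding N_def nbhd_def by blast
            ultimately show False using h(3) by simp
          qed
          ultimately have "{v,p2} \<in> M1" by simp
          then have "v \<in> \<Union>M1" by blast
          then have "v \<in> W p1" using UMIM[OF sg m(1)] by (rule subsetD[rotated])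
          then show False using vW by blast
        qed
      qed
    qed
    also have "\<dots> = (\<Sum>p\<in>N. card (MIM (W p) E))"
    proof (rule sum.cong[OF refl])
      fix p assume "p \<in> N"
      have "inj_on (insert {v,p}) (MIM (W p) E)"
      proof (rule inj_onI)
        fix M1 M2 assume "M1 \<in> MIM (W p) E" "M2 \<in> MIM (W p) E" "insert {v,p} M1 = insert {v,p} M2"
        then show "M1 = M2" using notinB insert_ident by metis
      qed
      then show "card (insert {v,p} ` MIM (W p) E) = card (MIM (W p) E)" by (rule card_image)
    qed
    finally show ?thesis .
  qed
  have fXA: "finite XA" unfolding XA_def using fP fMB by blast
  have fXB: "finite XB" unfolding XB_def using fN fMW by blast
  have "card (MIM V E) = card XA + card XB" using eq dis fXA fXB card_Un_disjoint by metis
  moreover have "card P = card A choose 2" unfolding P_def using n_subsets[OF fA] by simp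
  ultimately show ?thesis using cA cB unfolding A_def N_def by simp
qed

end

theorem corollary2p8:
  fixes V :: "'a set" and E :: "'a \<Rightarrow> 'a \<Rightarrow> bool" and B :: "'a set" and r :: nat and v :: 'a
  assumes "sgraph V E"
    and "pendant_block V E B"
    and "card B = r" and "is_clique B E"
    and "r \<ge> 3"
    and "v \<in> B" and "cutpoint V E v"
  shows "card (MIM V E) =
           ((r - 1) choose 2) * card (MIM (V - B) E)
           + (\<Sum>p\<in>nbhd V E v. card (MIM (V - (cnbhd V E v \<union> cnbhd V E p)) E))"
proof -
  have blk: "is_block V E B" and c1: "card {u \<in> B. cutpoint V E u} = 1"
    using assms(2) unfolding pendant_block_def by blast+
  have BV: "B \<subseteq> V" using blk unfolding is_block_def by blast
  have vin: "v \<in> {u \<in> B. cutpoint V E u}" using assms(6,7) by blast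
  obtain z where z: "{u \<in> B. cutpoint V E u} = {z}" using c1 by (metis One_nat_def card_1_singleton_iff)
  have "v = z" using vin unfolding z by simp
  then have cs: "{u \<in> B. cutpoint V E u} = {v}" using z by simp
  have K: "y \<in> B" if a: "a \<in> B - {v}" "E a y" for a y
  proof -
    have "\<not> cutpoint V E a" using cs a(1) by blast
    then show ?thesis using block_nbr[OF assms(1) blk assms(4) _ _ a(2)] a(1) by blast
  qed
  have c3: "card B \<ge> 3" using assms(3,5) by simp
  interpret PB V E B v by (rule PB.intro[OF assms(1) BV assms(4) assms(6) K c3])
  have fB: "finite B" using assms(3,5) by (metis card.infinite not_numeral_le_zero)
  have "card (B - {v}) = r - 1" using assms(3,6) fB by (simp add: card_Diff_singleton)
  then show ?thesis using count by simp
qed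

end
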